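(* Let $R$ be a set of $n$ red points and $B$ a set of $n$ blue points, all distinct and on the line $y=0$, given sorted by $x$-coordinate. Then a minimum-weight non-crossing bichromatic perfect matching of $R\cup B$ (with arcs drawn above $y=0$) can be computed in $O(n)$ time. *)

theory Defs
  imports Complex_Main
begin

text \<open>Points lie on the line y = 0 and are identified with their x-coordinates.\<close>

definition bichromatic_perfect_matching :: "real set \<Rightarrow> real set \<Rightarrow> (real \<times> real) set \<Rightarrow> bool" where
  "bichromatic_perfect_matching R B M \<longleftrightarrow>
     M \<subseteq> R \<times> B \<and> (\<forall>r\<in>R. \<exists>!b. (r, b) \<in> M) \<and> (\<forall>b\<in>B. \<exists>!r. (r, b) \<in> M)"

text \<open>Two arcs drawn above the line cross iff their endpoints interleave.\<close>
definition arcs_cross :: "real \<times> real \<Rightarrow> real \<times> real \<Rightarrow> bool" where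
  "arcs_cross e f \<longleftrightarrow>
     (let l1 = min (fst e) (snd e); h1 = max (fst e) (snd e);
          l2 = min (fst f) (snd f); h2 = max (fst f) (snd f)
      in (l1 < l2 \<and> l2 < h1 \<and> h1 < h2) \<or> (l2 < l1 \<and> l1 < h2 \<and> h2 < h1))"

definition non_crossing :: "(real \<times> real) set \<Rightarrow> bool" where
  "non_crossing M \<longleftrightarrow> (\<forall>e\<in>M. \<forall>f\<in>M. \<not> arcs_cross e f)"

definition matching_weight :: "(real \<times> real) set \<Rightarrow> real" where
  "matching_weight M = (\<Sum>(r, b)\<in>M. \<bar>r - b\<bar>)"

definition min_weight_nc_matching :: "real set \<Rightarrow> real set \<Rightarrow> (real \<times> real) set \<Rightarrow> bool" where
  "min_weight_nc_matching R B M \<longleftrightarrow>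
     bichromatic_perfect_matching R B M \<and> non_crossing M \<and>
     (\<forall>M'. bichromatic_perfect_matching R B M' \<and> non_crossing M' \<longrightarrow>
            matching_weight M \<le> matching_weight M')"

text \<open>The algorithm: a left-to-right scan with a (monochromatic) stack.
  Input points are (x, is_red); output pairs are (red x, blue x).\<close>
fun match_scan :: "(real \<times> bool) list \<Rightarrow> (real \<times> bool) list \<Rightarrow> (real \<times> real) list" where
  "match_scan [] stk = []"
| "match_scan (p # ps) [] = match_scan ps [p]"
| "match_scan (p # ps) (q # stk) =
     (if snd p = snd q then match_scan ps (p # q # stk)
      else (if snd p then (fst p, fst q) else (fst q, fst p)) # match_scan ps stk)"

definition line_matching :: "(real \<times> bool) list \<Rightarrow> (real \<times> real) list" where
  "line_matching ps = match_scan ps []"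

text \<open>Running-time (step-count) functions, written in the style produced by the
  HOL-Library time_fun command: each call costs one unit plus the cost of its
  recursive calls; constant-time primitives (fst, snd, comparisons, Cons) are
  charged one unit each.\<close>
fun T_match_scan :: "(real \<times> bool) list \<Rightarrow> (real \<times> bool) list \<Rightarrow> nat" where
  "T_match_scan [] stk = 1"
| "T_match_scan (p # ps) [] = T_match_scan ps [p] + 1"
| "T_match_scan (p # ps) (q # stk) =
     (if snd p = snd q then T_match_scan ps (p # q # stk) + 3
      else T_match_scan ps stk + 6)"

definition T_line_matching :: "(real \<times> bool) list \<Rightarrow> nat" where
  "T_line_matching ps = T_match_scan ps [] + 1"

end

theory Submission
  imports Defs
begin

lemma T_bound: "T_match_scan ps stk \<le> 6 * length ps + 1"
  by (induction ps stk rule: T_match_scan.induct) auto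

lemma decomp:
  "y \<in> set ps \<Longrightarrow> snd y \<noteq> snd (hd ps) \<Longrightarrow>
   \<exists>pre p q ys. ps = pre @ p # q # ys \<and> (\<forall>a\<in>set pre. snd a = snd (hd ps)) \<and>
     snd p = snd (hd ps) \<and> snd q \<noteq> snd (hd ps)"
proof (induction ps)
  case Nil then show ?case by simp
next
  case (Cons x xs)
  show ?case
  proof (cases xs)
    case Nil with Cons show ?thesis by simp
  next
    case (Cons z zs)
    show ?thesis
    proof (cases "snd z = snd x")
      case False
      then show ?thesis using Cons by (intro exI[of _ "[]"] exI[of _ x] exI[of _ z] exI[of _ zs]) auto
    next
      case True
      have "y \<in> set xs" "snd y \<noteq> snd (hd xs)" using Cons.prems Cons True by auto
      from Cons.IH[OF this] obtain pre p q ys where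
        "xs = pre @ p # q # ys" "\<forall>a\<in>set pre. snd a = snd (hd xs)" "snd p = snd (hd xs)" "snd q \<noteq> snd (hd xs)"
        by blast
      moreover have "hd xs = z" using \<open>xs = z # zs\<close> by simp
      ultimately show ?thesis using True by (intro exI[of _ "x#pre"] exI[of _ p] exI[of _ q] exI[of _ ys]) auto
    qed
  qed
qed

lemma arith_ex: "(p::real) < q \<Longrightarrow> q < a \<Longrightarrow> b < p \<or> q < b \<Longrightarrow> \<bar>q - p\<bar> + \<bar>a - b\<bar> \<le> \<bar>a - p\<bar> + \<bar>b - q\<bar>"
  by arith

lemma cross_inside: "arcs_cross e f \<Longrightarrow> \<exists>y\<in>{fst f, snd f}. min (fst e) (snd e) < y \<and> y < max (fst e) (snd e)"
  unfolding arcs_cross_def Let_def by (auto simp: min_def max_def split: if_splits)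

lemma cross_sym: "arcs_cross e f \<longleftrightarrow> arcs_cross f e"
  unfolding arcs_cross_def Let_def by auto

lemma sorted_distinct: "sorted_wrt (\<lambda>p q. fst p < fst q) (ps::(real\<times>bool) list) \<Longrightarrow> distinct ps"
proof (induction ps)
  case (Cons a ps)
  have "a \<notin> set ps"
  proof
    assume "a \<in> set ps"
    moreover from Cons.prems have "\<forall>x\<in>set ps. fst a < fst x" by simp
    ultimately have "fst a < fst a" by blast
    then show False by simp
  qed
  with Cons show ?case by simp
qed simp


lemma ms_push: "snd p = snd s \<Longrightarrow> match_scan (p#ps) (s#st) = match_scan ps (p#s#st)"
  by (simp only: match_scan.simps if_True simp_thms)
lemma ms_pop: "snd p \<noteq> snd s \<Longrightarrow> match_scan (p#ps) (s#st) = (if snd p then (fst p, fst s) else (fst s, fst p)) # match_scan ps st"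
  by (simp only: match_scan.simps if_False simp_thms)
lemma ms_nil: "match_scan (p#ps) [] = match_scan ps [p]"
  by (simp only: match_scan.simps)

lemma scan_pop:
  "(\<forall>a\<in>set pre. snd a = snd p) \<Longrightarrow> (\<forall>a\<in>set stk. snd a = snd p) \<Longrightarrow> snd q \<noteq> snd p \<Longrightarrow>
   match_scan (pre @ p # q # ys) stk =
   (if snd q then (fst q, fst p) else (fst p, fst q)) # match_scan (pre @ ys) stk"
proof (induction pre arbitrary: stk)
  case Nil
  show ?case
  proof (cases stk)
    case Nil
    then show ?thesis using ms_nil[of p "q#ys"] ms_pop[OF Nil.prems(3), of ys "[]"] by simp
  next
    case (Cons s st)
    then have "snd p = snd s" using Nil.prems by simp
    then show ?thesis using Cons ms_push[of p s "q#ys" st] ms_pop[OF Nil.prems(3), of ys "s#st"] by simp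
  qed
next
  case (Cons a pre)
  have ih: "match_scan (pre @ p # q # ys) (a # stk) =
   (if snd q then (fst q, fst p) else (fst p, fst q)) # match_scan (pre @ ys) (a # stk)"
    using Cons.prems by (intro Cons.IH) auto
  show ?case
  proof (cases stk)
    case Nil then show ?thesis using ih ms_nil[of a "pre @ p # q # ys"] ms_nil[of a "pre @ ys"] by simp
  next
    case (Cons s st)
    then have "snd a = snd s" using Cons.prems by simp
    then show ?thesis using ih Cons ms_push[of a s "pre @ p # q # ys" st] ms_push[of a s "pre @ ys" st] by simp
  qed
qed

lemma remove_edge:
  assumes "bichromatic_perfect_matching R B M" "(\<rho>, \<beta>) \<in> M"
  shows "bichromatic_perfect_matching (R - {\<rho>}) (B - {\<beta>}) (M - {(\<rho>, \<beta>)})"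
proof -
  have sub: "M \<subseteq> R \<times> B" and uR: "\<forall>r\<in>R. \<exists>!b. (r, b) \<in> M" and uB: "\<forall>b\<in>B. \<exists>!r. (r, b) \<in> M"
    using assms(1) unfolding bichromatic_perfect_matching_def by auto
  have ur: "b = b'" if "(r, b) \<in> M" "(r, b') \<in> M" for r b b'
  proof -
    have "r \<in> R" using that(1) sub by blast
    then show ?thesis using uR that by blast
  qed
  have ub: "r = r'" if "(r, b) \<in> M" "(r', b) \<in> M" for r r' b
  proof -
    have "b \<in> B" using that(1) sub by blast
    then show ?thesis using uB that by blast
  qed
  show ?thesis unfolding bichromatic_perfect_matching_def
  proof (intro conjI ballI)
    show "M - {(\<rho>, \<beta>)} \<subseteq> (R - {\<rho>}) \<times> (B - {\<beta>})"
    proof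
      fix x assume x: "x \<in> M - {(\<rho>, \<beta>)}"
      obtain r b where xrb: "x = (r, b)" by (cases x)
      have m: "(r, b) \<in> M" "(r, b) \<noteq> (\<rho>, \<beta>)" using x xrb by auto
      have "r \<in> R" "b \<in> B" using m sub by auto
      moreover have "r \<noteq> \<rho>" using m ur assms(2) by blast
      moreover have "b \<noteq> \<beta>" using m ub assms(2) by blast
      ultimately show "x \<in> (R - {\<rho>}) \<times> (B - {\<beta>})" using xrb by blast
    qed
  next
    fix r assume r: "r \<in> R - {\<rho>}"
    then obtain b where b: "(r, b) \<in> M" using uR by blast
    show "\<exists>!b. (r, b) \<in> M - {(\<rho>, \<beta>)}"
    proof (rule ex1I[of _ b])
      show "(r, b) \<in> M - {(\<rho>, \<beta>)}" using b r by blast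
      show "\<And>y. (r, y) \<in> M - {(\<rho>, \<beta>)} \<Longrightarrow> y = b" using ur b by blast
    qed
  next
    fix b assume b: "b \<in> B - {\<beta>}"
    then obtain r where r: "(r, b) \<in> M" using uB by blast
    show "\<exists>!r. (r, b) \<in> M - {(\<rho>, \<beta>)}"
    proof (rule ex1I[of _ r])
      show "(r, b) \<in> M - {(\<rho>, \<beta>)}" using b r by blast
      show "\<And>y. (y, b) \<in> M - {(\<rho>, \<beta>)} \<Longrightarrow> y = r" using ub r by blast
    qed
  qed
qed

lemma add_edge:
  assumes "bichromatic_perfect_matching (R - {\<rho>}) (B - {\<beta>}) S" "\<rho> \<in> R" "\<beta> \<in> B"
  shows "bichromatic_perfect_matching R B (insert (\<rho>, \<beta>) S)"
proof -
  have sub: "S \<subseteq> (R - {\<rho>}) \<times> (B - {\<beta>})" and uR: "\<forall>r\<in>R - {\<rho>}. \<exists>!b. (r, b) \<in> S"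
    and uB: "\<forall>b\<in>B - {\<beta>}. \<exists>!r. (r, b) \<in> S"
    using assms(1) unfolding bichromatic_perfect_matching_def by auto
  have nr: "r \<noteq> \<rho>" if "(r, b) \<in> S" for r b using that sub by blast
  have nb: "b \<noteq> \<beta>" if "(r, b) \<in> S" for r b using that sub by blast
  show ?thesis unfolding bichromatic_perfect_matching_def
  proof (intro conjI ballI)
    show "insert (\<rho>, \<beta>) S \<subseteq> R \<times> B" using sub assms(2,3) by blast
  next
    fix r assume r: "r \<in> R"
    show "\<exists>!b. (r, b) \<in> insert (\<rho>, \<beta>) S"
    proof (cases "r = \<rho>")
      case True
      show ?thesis
      proof (rule ex1I[of _ \<beta>])
        show "(r, \<beta>) \<in> insert (\<rho>, \<beta>) S" using True by simp
        show "\<And>y. (r, y) \<in> insert (\<rho>, \<beta>) S \<Longrightarrow> y = \<beta>" using True nr by blast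
      qed
    next
      case False
      then have rr: "r \<in> R - {\<rho>}" using r by blast
      then obtain b where b: "(r, b) \<in> S" using uR by blast
      show ?thesis
      proof (rule ex1I[of _ b])
        show "(r, b) \<in> insert (\<rho>, \<beta>) S" using b by simp
        show "\<And>y. (r, y) \<in> insert (\<rho>, \<beta>) S \<Longrightarrow> y = b" using False uR rr b by blast
      qed
    qed
  next
    fix b assume b: "b \<in> B"
    show "\<exists>!r. (r, b) \<in> insert (\<rho>, \<beta>) S"
    proof (cases "b = \<beta>")
      case True
      show ?thesis
      proof (rule ex1I[of _ \<rho>])
        show "(\<rho>, b) \<in> insert (\<rho>, \<beta>) S" using True by simp
        show "\<And>y. (y, b) \<in> insert (\<rho>, \<beta>) S \<Longrightarrow> y = \<rho>" using True nb by blast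
      qed
    next
      case False
      then have bb: "b \<in> B - {\<beta>}" using b by blast
      then obtain r where r: "(r, b) \<in> S" using uB by blast
      show ?thesis
      proof (rule ex1I[of _ r])
        show "(r, b) \<in> insert (\<rho>, \<beta>) S" using r by simp
        show "\<And>y. (y, b) \<in> insert (\<rho>, \<beta>) S \<Longrightarrow> y = r" using False uB bb r by blast
      qed
    qed
  qed
qed

lemma weight_remove:
  "finite M \<Longrightarrow> (r, b) \<in> M \<Longrightarrow> matching_weight M = \<bar>r - b\<bar> + matching_weight (M - {(r, b)})"
  unfolding matching_weight_def by (simp add: sum.remove)

lemma sum2: "finite D \<Longrightarrow> b \<notin> D \<Longrightarrow> a \<notin> insert b D \<Longrightarrow> sum f (insert a (insert b D)) = f a + (f b + sum f D)"
  by simp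

lemma exchange:
  assumes M: "bichromatic_perfect_matching R B M" and fin: "finite R" "finite B"
    and rho: "\<rho> \<in> R" and beta: "\<beta> \<in> B"
    and cond: "\<And>r0 b0. (\<rho>, b0) \<in> M \<Longrightarrow> (r0, \<beta>) \<in> M \<Longrightarrow> b0 \<noteq> \<beta> \<Longrightarrow>
                 \<bar>\<rho> - \<beta>\<bar> + \<bar>r0 - b0\<bar> \<le> \<bar>\<rho> - b0\<bar> + \<bar>r0 - \<beta>\<bar>"
  shows "\<exists>M''. bichromatic_perfect_matching R B M'' \<and> (\<rho>, \<beta>) \<in> M'' \<and> matching_weight M'' \<le> matching_weight M"
proof -
  have sub: "M \<subseteq> R \<times> B" and uR: "\<forall>r\<in>R. \<exists>!b. (r, b) \<in> M" and uB: "\<forall>b\<in>B. \<exists>!r. (r, b) \<in> M"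
    using M unfolding bichromatic_perfect_matching_def by auto
  have ur: "b = b'" if "(r, b) \<in> M" "(r, b') \<in> M" for r b b'
  proof -
    have "r \<in> R" using that(1) sub by blast
    then show ?thesis using uR that by blast
  qed
  have ub: "r = r'" if "(r, b) \<in> M" "(r', b) \<in> M" for r r' b
  proof -
    have "b \<in> B" using that(1) sub by blast
    then show ?thesis using uB that by blast
  qed
  from uR rho obtain b0 where b0: "(\<rho>, b0) \<in> M" by blast
  from uB beta obtain r0 where r0: "(r0, \<beta>) \<in> M" by blast
  have finM: "finite M" using sub fin by (meson finite_SigmaI finite_subset)
  show ?thesis
  proof (cases "b0 = \<beta>")
    case True then show ?thesis using M b0 by blast
  next
    case False
    have r0R: "r0 \<in> R" and b0B: "b0 \<in> B" using sub r0 b0 by auto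
    have r0n: "r0 \<noteq> \<rho>" using ur b0 r0 False by blast
    have n1: "(\<rho>, \<beta>) \<notin> M" using ur b0 False by blast
    have n2: "(r0, b0) \<notin> M" using ur r0 False by blast
    define D where "D = M - {(\<rho>, b0), (r0, \<beta>)}"
    define M'' where "M'' = insert (\<rho>, \<beta>) (insert (r0, b0) D)"
    have finD: "finite D" using finM D_def by simp
    have DM: "D \<subseteq> M" by (auto simp: D_def)
    have eqM: "M = insert (\<rho>, b0) (insert (r0, \<beta>) D)" using b0 r0 D_def by auto
    have i1: "(r0, \<beta>) \<notin> D" "(\<rho>, b0) \<notin> insert (r0, \<beta>) D" using False by (auto simp: D_def)
    have i2: "(r0, b0) \<notin> D" "(\<rho>, \<beta>) \<notin> insert (r0, b0) D" using n1 n2 r0n DM by auto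
    have wM: "matching_weight M = \<bar>\<rho> - b0\<bar> + (\<bar>r0 - \<beta>\<bar> + matching_weight D)"
      unfolding matching_weight_def by (subst eqM, subst sum2[OF finD i1]) simp
    have wM'': "matching_weight M'' = \<bar>\<rho> - \<beta>\<bar> + (\<bar>r0 - b0\<bar> + matching_weight D)"
      unfolding M''_def matching_weight_def by (subst sum2[OF finD i2]) simp
    have DD: "(r, b) \<in> D \<longleftrightarrow> (r, b) \<in> M \<and> r \<noteq> \<rho> \<and> r \<noteq> r0" for r b
    proof
      assume "(r, b) \<in> D"
      then have "(r, b) \<in> M" "(r, b) \<noteq> (\<rho>, b0)" "(r, b) \<noteq> (r0, \<beta>)" by (auto simp: D_def)
      then show "(r, b) \<in> M \<and> r \<noteq> \<rho> \<and> r \<noteq> r0" using ur b0 r0 by blast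
    next
      assume "(r, b) \<in> M \<and> r \<noteq> \<rho> \<and> r \<noteq> r0"
      then show "(r, b) \<in> D" by (auto simp: D_def)
    qed
    have DD2: "(r, b) \<in> D \<longleftrightarrow> (r, b) \<in> M \<and> b \<noteq> b0 \<and> b \<noteq> \<beta>" for r b
    proof
      assume "(r, b) \<in> D"
      then have "(r, b) \<in> M" "(r, b) \<noteq> (\<rho>, b0)" "(r, b) \<noteq> (r0, \<beta>)" by (auto simp: D_def)
      then show "(r, b) \<in> M \<and> b \<noteq> b0 \<and> b \<noteq> \<beta>" using ub b0 r0 by blast
    next
      assume "(r, b) \<in> M \<and> b \<noteq> b0 \<and> b \<noteq> \<beta>"
      then show "(r, b) \<in> D" by (auto simp: D_def)
    qed
    have "bichromatic_perfect_matching R B M''"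
      unfolding bichromatic_perfect_matching_def
    proof (intro conjI ballI)
      show "M'' \<subseteq> R \<times> B" using sub rho beta r0R b0B DM by (auto simp: M''_def)
    next
      fix r assume r: "r \<in> R"
      then obtain b where b: "(r, b) \<in> M" using uR by blast
      show "\<exists>!b. (r, b) \<in> M''"
      proof (cases "r = \<rho>")
        case True
        show ?thesis
        proof (rule ex1I[of _ \<beta>])
          show "(r, \<beta>) \<in> M''" using True by (simp add: M''_def)
          show "\<And>y. (r, y) \<in> M'' \<Longrightarrow> y = \<beta>" using True r0n DD by (auto simp: M''_def)
        qed
      next
        case nr: False
        show ?thesis
        proof (cases "r = r0")
          case True
          show ?thesis
          proof (rule ex1I[of _ b0])
            show "(r, b0) \<in> M''" using True by (simp add: M''_def)
            show "\<And>y. (r, y) \<in> M'' \<Longrightarrow> y = b0" using True nr DD by (auto simp: M''_def)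
          qed
        next
          case False
          show ?thesis
          proof (rule ex1I[of _ b])
            show "(r, b) \<in> M''" using b False nr DD by (simp add: M''_def)
            show "\<And>y. (r, y) \<in> M'' \<Longrightarrow> y = b" using b False nr DD ur by (auto simp: M''_def)
          qed
        qed
      qed
    next
      fix b assume b: "b \<in> B"
      then obtain r where r: "(r, b) \<in> M" using uB by blast
      show "\<exists>!r. (r, b) \<in> M''"
      proof (cases "b = \<beta>")
        case True
        show ?thesis
        proof (rule ex1I[of _ \<rho>])
          show "(\<rho>, b) \<in> M''" using True by (simp add: M''_def)
          show "\<And>y. (y, b) \<in> M'' \<Longrightarrow> y = \<rho>" using True False DD2 by (auto simp: M''_def)
        qed
      next
        case nb: False
        show ?thesis
        proof (cases "b = b0")
          case True
          show ?thesis
          proof (rule ex1I[of _ r0])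
            show "(r0, b) \<in> M''" using True by (simp add: M''_def)
            show "\<And>y. (y, b) \<in> M'' \<Longrightarrow> y = r0" using True nb DD2 by (auto simp: M''_def)
          qed
        next
          case False
          show ?thesis
          proof (rule ex1I[of _ r])
            show "(r, b) \<in> M''" using r False nb DD2 by (simp add: M''_def)
            show "\<And>y. (y, b) \<in> M'' \<Longrightarrow> y = r" using r False nb DD2 ub by (auto simp: M''_def)
          qed
        qed
      qed
    qed
    moreover have "(\<rho>, \<beta>) \<in> M''" by (simp add: M''_def)
    moreover have "matching_weight M'' \<le> matching_weight M"
      using wM wM'' cond[OF b0 r0 False] by simp
    ultimately show ?thesis by blast
  qed
qed


lemma main:
  assumes "finite R" "finite B" "R \<inter> B = {}" "card R = card B"
    "sorted_wrt (\<lambda>p q. fst p < fst q) ps"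
    "set ps = (\<lambda>r. (r, True)) ` R \<union> (\<lambda>b. (b, False)) ` B"
  shows "bichromatic_perfect_matching R B (set (match_scan ps [])) \<and> non_crossing (set (match_scan ps [])) \<and>
    (\<forall>M'. bichromatic_perfect_matching R B M' \<longrightarrow> matching_weight (set (match_scan ps [])) \<le> matching_weight M')"
  using assms
proof (induction "length ps" arbitrary: ps R B rule: less_induct)
  case less
  show ?case
  proof (cases "ps = []")
    case True
    then have "R = {}" "B = {}" using less.prems(6) by auto
    then show ?thesis using True
      by (auto simp: bichromatic_perfect_matching_def non_crossing_def matching_weight_def)
  next
    case False
    have colR: "\<And>x. x \<in> R \<longleftrightarrow> (x, True) \<in> set ps" and colB: "\<And>x. x \<in> B \<longleftrightarrow> (x, False) \<in> set ps"
      using less.prems(6) by auto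
    have "R \<noteq> {} \<or> B \<noteq> {}" using False less.prems(6) by auto
    then have "R \<noteq> {}" "B \<noteq> {}" using less.prems(1,2,4) by auto
    then obtain r b where rb: "r \<in> R" "b \<in> B" by blast
    have hd_in: "hd ps \<in> set ps" using False by simp
    have "\<exists>y\<in>set ps. snd y \<noteq> snd (hd ps)"
    proof (cases "snd (hd ps)")
      case True then show ?thesis using rb colB by force
    next
      case False then show ?thesis using rb colR by force
    qed
    then obtain y where "y \<in> set ps" "snd y \<noteq> snd (hd ps)" by blast
    from decomp[OF this] obtain pre p q ys where dec: "ps = pre @ p # q # ys"
      "\<forall>a\<in>set pre. snd a = snd p" "snd q \<noteq> snd p" by metis
    define ps' where "ps' = pre @ ys"
    define \<rho> where "\<rho> = (if snd q then fst q else fst p)"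
    define \<beta> where "\<beta> = (if snd q then fst p else fst q)"
    have e_eq: "(if snd q then (fst q, fst p) else (fst p, fst q)) = (\<rho>, \<beta>)"
      by (simp add: \<rho>_def \<beta>_def)
    have scan: "match_scan ps [] = (\<rho>, \<beta>) # match_scan ps' []"
      unfolding dec(1) ps'_def e_eq[symmetric] by (rule scan_pop[OF dec(2) _ dec(3)]) simp
    have srt: "sorted_wrt (\<lambda>p q. fst p < fst q) (pre @ p # q # ys)" using less.prems(5) dec by simp
    have pq: "fst p < fst q" and pre_lt: "\<forall>a\<in>set pre. fst a < fst p"
      and ys_gt: "\<forall>a\<in>set ys. fst q < fst a"
      and srt': "sorted_wrt (\<lambda>p q. fst p < fst q) ps'"
      using srt by (auto simp: sorted_wrt_append ps'_def)
    have pnot: "p \<notin> set ps'" "q \<notin> set ps'" using pre_lt ys_gt pq unfolding ps'_def by force+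
    have setps: "set ps = insert p (insert q (set ps'))" using dec ps'_def by auto
    have pq_set: "{p, q} = {(\<rho>, True), (\<beta>, False)}"
    proof (cases "snd q")
      case True
      then have "snd p = False" using dec(3) by blast
      then have "p = (fst p, False)" "q = (fst q, True)" using True by (metis prod.collapse)+
      then show ?thesis using True by (auto simp: \<rho>_def \<beta>_def)
    next
      case False
      then have "snd p = True" using dec(3) by blast
      then have "p = (fst p, True)" "q = (fst q, False)" using False by (metis prod.collapse)+
      then show ?thesis using False by (auto simp: \<rho>_def \<beta>_def)
    qed
    have rhoR: "\<rho> \<in> R" and betaB: "\<beta> \<in> B" using pq_set setps colR colB by auto
    define R' where "R' = R - {\<rho>}"
    define B' where "B' = B - {\<beta>}"
    have set': "set ps' = (\<lambda>r. (r, True)) ` R' \<union> (\<lambda>b. (b, False)) ` B'"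
    proof -
      have "set ps' = set ps - {p, q}" using setps pnot by auto
      also have "\<dots> = set ps - {(\<rho>, True), (\<beta>, False)}" using pq_set by simp
      also have "\<dots> = (\<lambda>r. (r, True)) ` R' \<union> (\<lambda>b. (b, False)) ` B'"
        using less.prems(6) by (auto simp: R'_def B'_def)
      finally show ?thesis .
    qed
    have card': "card R' = card B'" using less.prems(1,2,4) rhoR betaB by (simp add: R'_def B'_def)
    have len: "length ps' < length ps" using dec ps'_def by simp
    have IH: "bichromatic_perfect_matching R' B' (set (match_scan ps' [])) \<and> non_crossing (set (match_scan ps' [])) \<and>
      (\<forall>M'. bichromatic_perfect_matching R' B' M' \<longrightarrow> matching_weight (set (match_scan ps' [])) \<le> matching_weight M')"
    proof -
      have "finite R'" "finite B'" "R' \<inter> B' = {}" using less.prems(1,2,3) by (auto simp: R'_def B'_def)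
      then show ?thesis using less.hyps[OF len, of R' B'] card' srt' set' by blast
    qed
    define S where "S = set (match_scan ps' [])"
    have Sbpm: "bichromatic_perfect_matching R' B' S" using IH S_def by simp
    have Ssub: "S \<subseteq> R' \<times> B'" using Sbpm unfolding bichromatic_perfect_matching_def by simp
    have setM: "set (match_scan ps []) = insert (\<rho>, \<beta>) S" using scan S_def by simp
    have pos: "x < fst p \<or> fst q < x \<or> x = fst p \<or> x = fst q" if "(x, c) \<in> set ps" for x c
      using that dec pre_lt ys_gt by force
    have below: "c = snd p" if "(x, c) \<in> set ps" "x < fst p" for x c
      using that dec pre_lt ys_gt pq by force
    have endpts: "{fst p, fst q} = {\<rho>, \<beta>}" by (auto simp: \<rho>_def \<beta>_def)
    have adj: "x < fst p \<or> fst q < x" if xin: "x \<in> R' \<union> B'" for x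
    proof -
      have "x \<noteq> \<rho>" "x \<noteq> \<beta>" using that less.prems(3) rhoR betaB by (auto simp: R'_def B'_def)
      moreover obtain c where "(x, c) \<in> set ps" using xin colR colB by (auto simp: R'_def B'_def)
      ultimately show ?thesis using pos endpts by blast
    qed
    have bpm: "bichromatic_perfect_matching R B (insert (\<rho>, \<beta>) S)"
      using add_edge[of R \<rho> B \<beta> S] Sbpm rhoR betaB by (simp add: R'_def B'_def)
    have nc: "non_crossing (insert (\<rho>, \<beta>) S)"
    proof -
      have ncS: "non_crossing S" using IH S_def by simp
      have mm: "min \<rho> \<beta> = fst p" "max \<rho> \<beta> = fst q" using pq by (auto simp: \<rho>_def \<beta>_def)
      have no_in: "\<not> arcs_cross (\<rho>, \<beta>) f" if "f \<in> insert (\<rho>, \<beta>) S" for f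
      proof
        assume "arcs_cross (\<rho>, \<beta>) f"
        from cross_inside[OF this] obtain y where y: "y \<in> {fst f, snd f}" "fst p < y" "y < fst q"
          using mm by auto
        show False
        proof (cases "f = (\<rho>, \<beta>)")
          case True then show ?thesis using y by (auto simp: \<rho>_def \<beta>_def split: if_splits)
        next
          case False
          then have "f \<in> S" using that by auto
          then have "y \<in> R' \<union> B'" using Ssub y by auto
          then show ?thesis using adj y by force
        qed
      qed
      show ?thesis unfolding non_crossing_def
      proof (intro ballI)
        fix e f assume e: "e \<in> insert (\<rho>, \<beta>) S" and f: "f \<in> insert (\<rho>, \<beta>) S"
        show "\<not> arcs_cross e f"
        proof (cases "e = (\<rho>, \<beta>)")
          case True then show ?thesis using no_in f by simp
        next
          case ne: False
          show ?thesis
          proof (cases "f = (\<rho>, \<beta>)")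
            case True then show ?thesis using no_in e cross_sym by metis
          next
            case False then show ?thesis using ne e f ncS unfolding non_crossing_def by auto
          qed
        qed
      qed
    qed
    have opt: "matching_weight (insert (\<rho>, \<beta>) S) \<le> matching_weight M'"
      if M': "bichromatic_perfect_matching R B M'" for M'
    proof -
      have subM: "M' \<subseteq> R \<times> B" and uR: "\<forall>r\<in>R. \<exists>!b. (r, b) \<in> M'"
        using M' unfolding bichromatic_perfect_matching_def by auto
      have cond: "\<bar>\<rho> - \<beta>\<bar> + \<bar>r0 - b0\<bar> \<le> \<bar>\<rho> - b0\<bar> + \<bar>r0 - \<beta>\<bar>"
        if h: "(\<rho>, b0) \<in> M'" "(r0, \<beta>) \<in> M'" "b0 \<noteq> \<beta>" for r0 b0
      proof -
        have r0R: "r0 \<in> R" and b0B: "b0 \<in> B" using h subM by auto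
        have "r0 \<noteq> \<rho>" using uR rhoR h by blast
        have r0c: "(r0, True) \<in> set ps" and b0c: "(b0, False) \<in> set ps" using r0R b0B colR colB by auto
        show ?thesis
        proof (cases "snd q")
          case True
          have e1: "\<rho> = fst q" "\<beta> = fst p" by (simp_all add: \<rho>_def \<beta>_def True)
          have np: "\<not> snd p" using dec(3) True by blast
          have "r0 \<noteq> fst p" using r0R betaB e1 less.prems(3) by blast
          moreover have "\<not> r0 < fst p" using below[OF r0c] np by blast
          moreover have "r0 \<noteq> fst q" using \<open>r0 \<noteq> \<rho>\<close> e1 by simp
          ultimately have a: "fst q < r0" using pos[OF r0c] by blast
          have "b0 \<noteq> fst q" using b0B rhoR e1 less.prems(3) by blast
          moreover have "b0 \<noteq> fst p" using h(3) e1 by simp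
          ultimately have b: "b0 < fst p \<or> fst q < b0" using pos[OF b0c] by blast
          have X: "\<bar>fst q - fst p\<bar> + \<bar>r0 - b0\<bar> \<le> \<bar>r0 - fst p\<bar> + \<bar>b0 - fst q\<bar>"
            by (rule arith_ex[OF pq a b])
          have "\<bar>b0 - fst q\<bar> = \<bar>fst q - b0\<bar>" by (rule abs_minus_commute)
          then show ?thesis using X e1 by linarith
        next
          case False
          have e1: "\<rho> = fst p" "\<beta> = fst q" by (simp_all add: \<rho>_def \<beta>_def False)
          have np: "snd p" using dec(3) False by blast
          have "b0 \<noteq> fst p" using b0B rhoR e1 less.prems(3) by blast
          moreover have "\<not> b0 < fst p" using below[OF b0c] np by blast
          moreover have "b0 \<noteq> fst q" using h(3) e1 by simp
          ultimately have a: "fst q < b0" using pos[OF b0c] by blast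
          have "r0 \<noteq> fst q" using r0R betaB e1 less.prems(3) by blast
          moreover have "r0 \<noteq> fst p" using \<open>r0 \<noteq> \<rho>\<close> e1 by simp
          ultimately have b: "r0 < fst p \<or> fst q < r0" using pos[OF r0c] by blast
          have X: "\<bar>fst q - fst p\<bar> + \<bar>b0 - r0\<bar> \<le> \<bar>b0 - fst p\<bar> + \<bar>r0 - fst q\<bar>"
            by (rule arith_ex[OF pq a b])
          have "\<bar>b0 - fst p\<bar> = \<bar>fst p - b0\<bar>" "\<bar>b0 - r0\<bar> = \<bar>r0 - b0\<bar>" "\<bar>fst q - fst p\<bar> = \<bar>fst p - fst q\<bar>"
            by (rule abs_minus_commute)+
          then show ?thesis using X e1 by linarith
        qed
      qed
      obtain M'' where M'': "bichromatic_perfect_matching R B M''" "(\<rho>, \<beta>) \<in> M''"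
        "matching_weight M'' \<le> matching_weight M'"
        using exchange[OF M' less.prems(1,2) rhoR betaB cond] by blast
      have finM'': "finite M''" using M''(1) less.prems(1,2)
        unfolding bichromatic_perfect_matching_def by (meson finite_SigmaI finite_subset)
      have N: "bichromatic_perfect_matching R' B' (M'' - {(\<rho>, \<beta>)})"
        using remove_edge[OF M''(1,2)] by (simp add: R'_def B'_def)
      have "matching_weight S \<le> matching_weight (M'' - {(\<rho>, \<beta>)})" using IH N S_def by simp
      moreover have "(\<rho>, \<beta>) \<notin> S" using Ssub by (auto simp: R'_def)
      moreover have "finite S" using S_def by simp
      ultimately have "matching_weight (insert (\<rho>, \<beta>) S) \<le> matching_weight M''"
        using weight_remove[OF finM'' M''(2)] by (simp add: matching_weight_def)
      then show ?thesis using M''(3) by simp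
    qed
    show ?thesis using bpm nc opt setM by simp
  qed
qed


theorem mainTheorem6:
  "\<exists>c::real. \<forall>(R::real set) (B::real set) (ps::(real \<times> bool) list).
     finite R \<and> finite B \<and> R \<inter> B = {} \<and> card R = card B \<and>
     sorted_wrt (\<lambda>p q. fst p < fst q) ps \<and>
     set ps = (\<lambda>r. (r, True)) ` R \<union> (\<lambda>b. (b, False)) ` B
     \<longrightarrow> min_weight_nc_matching R B (set (line_matching ps)) \<and>
         real (T_line_matching ps) \<le> c * real (card R) + c"
proof (intro exI[of _ "12::real"] allI impI, elim conjE)
  fix R B :: "real set" and ps :: "(real \<times> bool) list"
  assume h1: "finite R" "finite B" "R \<inter> B = {}" "card R = card B"
     "sorted_wrt (\<lambda>p q. fst p < fst q) ps" "set ps = (\<lambda>r. (r, True)) ` R \<union> (\<lambda>b. (b, False)) ` B"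
  have m: "bichromatic_perfect_matching R B (set (match_scan ps [])) \<and> non_crossing (set (match_scan ps [])) \<and>
    (\<forall>M'. bichromatic_perfect_matching R B M' \<longrightarrow> matching_weight (set (match_scan ps [])) \<le> matching_weight M')"
    by (rule main[OF h1])
  have "distinct ps" using h1(5) by (rule sorted_distinct)
  then have "length ps = card (set ps)" by (simp add: distinct_card)
  also have "\<dots> = card ((\<lambda>r. (r, True)) ` R) + card ((\<lambda>b. (b, False)) ` B)"
    unfolding h1(6) using h1(1,2) by (intro card_Un_disjoint) auto
  also have "\<dots> = card R + card B" by (simp add: card_image inj_on_def)
  finally have len: "length ps = 2 * card R" using h1(4) by simp
  have "T_line_matching ps \<le> 6 * length ps + 2"
    using T_bound[of ps "[]"] by (simp add: T_line_matching_def)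
  then have "real (T_line_matching ps) \<le> 12 * real (card R) + 2" using len by linarith
  then show "min_weight_nc_matching R B (set (line_matching ps)) \<and>
         real (T_line_matching ps) \<le> 12 * real (card R) + 12"
    using m by (simp add: min_weight_nc_matching_def line_matching_def)
qed

end
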